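(* Applied to the Double Coverage algorithm on the line, the transformation described below, using upon each request $r_i$ the $r_i$-canonical matching, produces a lazy, local and monotone $k$-server algorithm.
   Context: $k$-server on the real line with $d(x,y)=|x-y|$: $k$ servers at initial points; requests arrive online and must be served by moving a server to the request; cost is total distance moved. Double Coverage (DC): on request $r$, let $s_L,s_R$ be the servers immediately to the left and right of $r$ (if one does not exist, ignore it); move both toward $r$ by $\min\{d(s_L,r),d(s_R,r)\}$; serve $r$ with the server that reached it. A server $s$ in configuration $S$ is adjacent to a point $v$ if no other server of $S$ lies on the segment between $v$ and $s$. An algorithm is lazy if on each request it moves only one server, to the request; local if it always serves a request with an adjacent server; monotone if whenever it would serve a request at $r$ with server $s$, it would also serve a request at any point between $r$ and $s$ with $s$. For sorted sets $X=\{x_1\le\dots\le x_k\}$, $Y=\{y_1\le\dots\le y_k\}$, the canonical matching matches $x_i$ with $y_i$. For $r\in X$, the $r$-canonical matching is obtained from the canonical matching as follows: if $r$ is matched to $y$ and other points of $Y$ lie between $r$ and $y$, let $y'$ be the one closest to $r$, with $y'$ matched to $x$; rematch $r$ with $y'$ and $x$ with $y$. Transformation: $A'$ starts in the same configuration as DC; upon request $r_i$, let $S_{DC}$ be DC's configuration after serving $r_i$ and $S_{A'}$ the configuration of $A'$ just before; compute the $r_i$-canonical matching of $S_{DC}$ to $S_{A'}$ and serve $r_i$ with the server of $A'$ matched to $r_i$. *)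

theory Defs
  imports Complex_Main "HOL-Library.Multiset"
begin

(* Configurations of k servers on the real line are multisets of reals
   (several servers may share a point); the number of servers is the size. *)

definition between :: "real \<Rightarrow> real \<Rightarrow> real \<Rightarrow> bool" where
  "between a b x \<longleftrightarrow> min a b \<le> x \<and> x \<le> max a b"

definition adjacent :: "real multiset \<Rightarrow> real \<Rightarrow> real \<Rightarrow> bool" where
  "adjacent S v s \<longleftrightarrow> s \<in># S \<and> (\<forall>x\<in>#S. between v s x \<longrightarrow> x = s)"

definition dc_step :: "real multiset \<Rightarrow> real \<Rightarrow> real multiset" where
  "dc_step C r =
    (let L = filter_mset (\<lambda>x. x < r) C; R = filter_mset (\<lambda>x. r < x) C in
     if r \<in># C then C
     else if L = {#} then add_mset r (C - {#Min_mset R#})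
     else if R = {#} then add_mset r (C - {#Max_mset L#})
     else (let sL = Max_mset L; sR = Min_mset R; d = min (r - sL) (sR - r)
           in {#sL + d, sR - d#} + (C - {#sL, sR#})))"

definition canonical_matching :: "real multiset \<Rightarrow> real multiset \<Rightarrow> (real \<times> real) list" where
  "canonical_matching X Y = zip (sorted_list_of_multiset X) (sorted_list_of_multiset Y)"

definition req_index :: "real multiset \<Rightarrow> real \<Rightarrow> nat" where
  "req_index X r = (LEAST i. i < size X \<and> sorted_list_of_multiset X ! i = r)"

(* r-canonical matching of X to Y (as a list of pairs, entry i being the pair of
   the i-th smallest point of X) *)
definition r_canonical_matching :: "real multiset \<Rightarrow> real multiset \<Rightarrow> real \<Rightarrow> (real \<times> real) list" where
  "r_canonical_matching X Y r =
    (let xs = sorted_list_of_multiset X; ys = sorted_list_of_multiset Y;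
         i = req_index X r; y = ys ! i;
         J = {j. j < length ys \<and> j \<noteq> i \<and> between r y (ys ! j)} in
     if J = {} then zip xs ys
     else (let j = (ARG_MIN (\<lambda>j. \<bar>ys ! j - r\<bar>) j. j \<in> J)
           in zip xs (ys[i := ys ! j, j := y])))"

definition matched_server :: "real multiset \<Rightarrow> real multiset \<Rightarrow> real \<Rightarrow> real" where
  "matched_server X Y r = snd (r_canonical_matching X Y r ! req_index X r)"

(* The transformation applied to a base algorithm with step function base_step
   (here: DC). State = (configuration of the base algorithm, configuration of A'). *)
definition transf_step :: "(real multiset \<Rightarrow> real \<Rightarrow> real multiset)
     \<Rightarrow> real multiset \<times> real multiset \<Rightarrow> real \<Rightarrow> real multiset \<times> real multiset" where
  "transf_step base_step st r =
    (let D' = base_step (fst st) r; A = snd st; s = matched_server D' A r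
     in (D', add_mset r (A - {#s#})))"

(* Generic deterministic online k-server algorithm: states 'st, configuration map conf,
   transition step, initial state st0. *)
definition reachable :: "('st \<Rightarrow> real \<Rightarrow> 'st) \<Rightarrow> 'st \<Rightarrow> 'st \<Rightarrow> bool" where
  "reachable step st0 st \<longleftrightarrow> (\<exists>rs. st = fold (\<lambda>r s. step s r) rs st0)"

definition serves_with :: "('st \<Rightarrow> real multiset) \<Rightarrow> ('st \<Rightarrow> real \<Rightarrow> 'st) \<Rightarrow> 'st \<Rightarrow> real \<Rightarrow> real \<Rightarrow> bool" where
  "serves_with conf step st r s \<longleftrightarrow>
     s \<in># conf st \<and> conf (step st r) = add_mset r (conf st - {#s#})"

definition lazy_alg :: "('st \<Rightarrow> real multiset) \<Rightarrow> ('st \<Rightarrow> real \<Rightarrow> 'st) \<Rightarrow> 'st \<Rightarrow> bool" where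
  "lazy_alg conf step st0 \<longleftrightarrow>
     (\<forall>st r. reachable step st0 st \<longrightarrow> (\<exists>s. serves_with conf step st r s))"

definition local_alg :: "('st \<Rightarrow> real multiset) \<Rightarrow> ('st \<Rightarrow> real \<Rightarrow> 'st) \<Rightarrow> 'st \<Rightarrow> bool" where
  "local_alg conf step st0 \<longleftrightarrow>
     (\<forall>st r s. reachable step st0 st \<longrightarrow> serves_with conf step st r s \<longrightarrow> adjacent (conf st) r s)"

definition monotone_alg :: "('st \<Rightarrow> real multiset) \<Rightarrow> ('st \<Rightarrow> real \<Rightarrow> 'st) \<Rightarrow> 'st \<Rightarrow> bool" where
  "monotone_alg conf step st0 \<longleftrightarrow>
     (\<forall>st r s r'. reachable step st0 st \<longrightarrow> serves_with conf step st r s \<longrightarrow>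
        between r s r' \<longrightarrow> serves_with conf step st r' s)"

end

theory Submission
  imports Defs
begin


definition P_ms :: "real multiset \<Rightarrow> real \<Rightarrow> real \<Rightarrow> real \<Rightarrow> bool" where
  "P_ms Y r y s \<longleftrightarrow> s \<in># Y \<and> between r y s \<and> (\<forall>x\<in>#Y. between r s x \<longrightarrow> x = s)"

lemma P_ms_unique: "P_ms Y r y s1 \<Longrightarrow> P_ms Y r y s2 \<Longrightarrow> s1 = s2"
  unfolding P_ms_def between_def
  by (smt (verit))

lemma matched_P:
  assumes "size X = size Y" "r \<in># X"
  shows "req_index X r < size Y \<and>
         P_ms Y r (sorted_list_of_multiset Y ! req_index X r) (matched_server X Y r)"
proof -
  define xs where "xs = sorted_list_of_multiset X"
  define ys where "ys = sorted_list_of_multiset Y"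
  define i where "i = req_index X r"
  define y where "y = ys ! i"
  define J where "J = {j. j < length ys \<and> j \<noteq> i \<and> between r y (ys ! j)}"
  have lx: "length xs = size X" unfolding xs_def by (metis mset_sorted_list_of_multiset size_mset)
  have ly: "length ys = size Y" unfolding ys_def by (metis mset_sorted_list_of_multiset size_mset)
  have sety: "set ys = set_mset Y" unfolding ys_def by (metis mset_sorted_list_of_multiset set_mset_mset)
  have "r \<in> set xs" using assms(2) unfolding xs_def by (metis mset_sorted_list_of_multiset set_mset_mset)
  then obtain k where k: "k < size X" "xs ! k = r" using lx by (metis in_set_conv_nth)
  have iP: "i < size X \<and> xs ! i = r" unfolding i_def req_index_def xs_def[symmetric]
    by (rule LeastI[of _ k]) (use k in auto)
  hence il: "i < length ys" using ly assms(1) by simp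
  have yY: "y \<in># Y" using il sety y_def by (metis nth_mem)
  have Y: "\<And>x. x \<in># Y \<Longrightarrow> \<exists>j<length ys. ys ! j = x" using sety by (metis in_set_conv_nth)
  have rc: "r_canonical_matching X Y r = (if J = {} then zip xs ys else zip xs (ys[i := ys ! (ARG_MIN (\<lambda>j. \<bar>ys ! j - r\<bar>) j. j \<in> J), (ARG_MIN (\<lambda>j. \<bar>ys ! j - r\<bar>) j. j \<in> J) := y]))"
    unfolding r_canonical_matching_def Let_def xs_def ys_def i_def y_def J_def by (rule refl)
  have lxy: "length xs = length ys" using lx ly assms(1) by simp
  show ?thesis
  proof (cases "J = {}")
    case True
    have ms: "matched_server X Y r = y"
      unfolding matched_server_def i_def[symmetric] rc using True il lxy y_def by simp
    have "P_ms Y r y y"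
      unfolding P_ms_def
    proof (intro conjI ballI impI)
      show "y \<in># Y" by (rule yY)
      show "between r y y" unfolding between_def by simp
      fix x assume "x \<in># Y" "between r y x"
      then obtain j where "j < length ys" "ys ! j = x" using Y by blast
      thus "x = y" using True \<open>between r y x\<close> unfolding J_def y_def by auto
    qed
    thus ?thesis using ms il ly unfolding i_def y_def ys_def by simp
  next
    case False
    define j where "j = (ARG_MIN (\<lambda>j. \<bar>ys ! j - r\<bar>) j. j \<in> J)"
    have fin: "finite J" unfolding J_def by simp
    have am: "is_arg_min (\<lambda>j. \<bar>ys ! j - r\<bar>) (\<lambda>j. j \<in> J) j"
      unfolding j_def arg_min_def
      by (rule someI_ex, rule ex_is_arg_min_if_finite[OF fin False])
    hence jJ: "j \<in> J" and jmin: "\<And>m. m \<in> J \<Longrightarrow> \<bar>ys ! j - r\<bar> \<le> \<bar>ys ! m - r\<bar>"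
      by (auto simp: is_arg_min_linorder)
    have jl: "j < length ys" "j \<noteq> i" "between r y (ys ! j)" using jJ unfolding J_def by auto
    have ms: "matched_server X Y r = ys ! j"
      unfolding matched_server_def i_def[symmetric] rc j_def[symmetric] using False il lxy jl by simp
    have "P_ms Y r y (ys ! j)"
      unfolding P_ms_def
    proof (intro conjI ballI impI)
      show "ys ! j \<in># Y" using jl sety by (metis nth_mem)
      show "between r y (ys ! j)" by (rule jl(3))
      fix x assume "x \<in># Y" "between r (ys ! j) x"
      then obtain m where m: "m < length ys" "ys ! m = x" using Y by blast
      show "x = ys ! j"
      proof (cases "m = i")
        case True
        thus ?thesis using m \<open>between r (ys ! j) x\<close> jl(3) unfolding y_def between_def by (smt (verit))
      next
        case False
        have bx: "between r y x" using \<open>between r (ys ! j) x\<close> jl(3) unfolding between_def by (smt (verit))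
        hence "m \<in> J" using m False unfolding J_def by auto
        from jmin[OF this] m \<open>between r (ys ! j) x\<close> show ?thesis unfolding between_def by (smt (verit))
      qed
    qed
    thus ?thesis using ms il ly unfolding i_def y_def ys_def by simp
  qed
qed


lemma sorted_count_idx:
  fixes xs :: "real list"
  assumes "sorted xs" "r \<in> set xs"
  shows "length (filter (\<lambda>x. x < r) xs) < length xs \<and> xs ! length (filter (\<lambda>x. x < r) xs) = r
     \<and> (\<forall>i < length (filter (\<lambda>x. x < r) xs). xs ! i \<noteq> r)"
  using assms
proof (induction xs)
  case Nil thus ?case by simp
next
  case (Cons a xs)
  show ?case
  proof (cases "a < r")
    case True
    hence "r \<in> set xs" using Cons.prems by auto
    with Cons.IH Cons.prems(1) have IH: "length (filter (\<lambda>x. x < r) xs) < length xs \<and> xs ! length (filter (\<lambda>x. x < r) xs) = r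
     \<and> (\<forall>i < length (filter (\<lambda>x. x < r) xs). xs ! i \<noteq> r)" by simp
    show ?thesis using True IH by (auto simp: nth_Cons' less_Suc_eq_0_disj)
  next
    case False
    have "a = r" using False Cons.prems by auto
    moreover have "filter (\<lambda>x. x < r) (a # xs) = []" using Cons.prems(1) \<open>a = r\<close>
      by (auto simp: filter_empty_conv)
    ultimately show ?thesis by simp
  qed
qed

lemma req_index_eq:
  assumes "r \<in># X"
  shows "req_index X r = size (filter_mset (\<lambda>x. x < r) X)"
proof -
  define xs where "xs = sorted_list_of_multiset X"
  have s: "sorted xs" unfolding xs_def by simp
  have m: "mset xs = X" unfolding xs_def by simp
  have rin: "r \<in> set xs" using assms m by (metis set_mset_mset)
  define c where "c = length (filter (\<lambda>x. x < r) xs)"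
  have c: "c < length xs" "xs ! c = r" "\<forall>i<c. xs ! i \<noteq> r"
    using sorted_count_idx[OF s rin] unfolding c_def by auto
  have "req_index X r = c"
    unfolding req_index_def xs_def[symmetric]
    apply (rule Least_equality)
    using c m apply (metis size_mset)
    using c by (metis not_less)
  moreover have "c = size (filter_mset (\<lambda>x. x < r) X)"
    unfolding c_def using m by (metis mset_filter size_mset)
  ultimately show ?thesis by simp
qed


lemma dc_facts:
  assumes "D \<noteq> {#}"
  shows "r \<in># dc_step D r \<and> size (dc_step D r) = size D \<and>
    size (filter_mset (\<lambda>x. x < r) (dc_step D r)) =
      (if r \<notin># D \<and> filter_mset (\<lambda>x. x < r) D \<noteq> {#} \<and>
          (filter_mset (\<lambda>x. r < x) D = {#} \<or>
           r - Max_mset (filter_mset (\<lambda>x. x < r) D) \<le> Min_mset (filter_mset (\<lambda>x. r < x) D) - r)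
       then size (filter_mset (\<lambda>x. x < r) D) - 1 else size (filter_mset (\<lambda>x. x < r) D))"
proof -
  define L where "L = filter_mset (\<lambda>x. x < r) D"
  define R where "R = filter_mset (\<lambda>x. r < x) D"
  have dc: "dc_step D r = (if r \<in># D then D
     else if L = {#} then add_mset r (D - {#Min_mset R#})
     else if R = {#} then add_mset r (D - {#Max_mset L#})
     else (let sL = Max_mset L; sR = Min_mset R; d = min (r - sL) (sR - r)
           in {#sL + d, sR - d#} + (D - {#sL, sR#})))"
    unfolding dc_step_def L_def R_def Let_def by simp
  have D0: "size D > 0" using assms by (simp add: nonempty_has_size)
  show ?thesis
  proof (cases "r \<in># D")
    case True
    thus ?thesis unfolding dc L_def[symmetric] R_def[symmetric] by (simp add: L_def)
  next
    case nr: False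
    show ?thesis
    proof (cases "L = {#}")
      case True
      have "R \<noteq> {#}"
      proof
        assume "R = {#}"
        obtain z where "z \<in># D" using assms by blast
        hence "z \<in># L \<or> z \<in># R \<or> z = r" unfolding L_def R_def by auto
        thus False using True \<open>R = {#}\<close> nr \<open>z \<in># D\<close> by auto
      qed
      hence "Min_mset R \<in># R" by simp
      hence mR: "Min_mset R \<in># D" "r < Min_mset R" by (simp_all add: R_def)
      have "filter_mset (\<lambda>x. x < r) (dc_step D r) = {#}"
        unfolding dc using nr True mR by (simp add: filter_diff_mset L_def[symmetric])
      thus ?thesis unfolding dc L_def[symmetric] R_def[symmetric] using nr True mR D0
        by (simp add: size_Diff_singleton)
    next
      case Lne: False
      have "Max_mset L \<in># L" using Lne by simp
      hence mL: "Max_mset L \<in># D" "Max_mset L < r" by (simp_all add: L_def)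
      have fL: "filter_mset (\<lambda>x. x < r) (D - {#Max_mset L#}) = L - {#Max_mset L#}"
        using mL by (simp add: filter_diff_mset L_def[symmetric])
      have sL: "size L \<ge> 1" using Lne by (simp add: Suc_le_eq nonempty_has_size)
      show ?thesis
      proof (cases "R = {#}")
        case True
        have "filter_mset (\<lambda>x. x < r) (dc_step D r) = L - {#Max_mset L#}"
          unfolding dc using nr Lne True fL by simp
        moreover have "Max_mset L \<in># L" using Lne by simp
        ultimately show ?thesis unfolding dc L_def[symmetric] R_def[symmetric] using nr Lne True mL D0
          by (simp add: size_Diff_singleton)
      next
        case Rne: False
        have "Min_mset R \<in># R" using Rne by simp
        hence mR: "Min_mset R \<in># D" "r < Min_mset R" by (simp_all add: R_def)
        define a where "a = Max_mset L"
        define b where "b = Min_mset R"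
        define d where "d = min (r - a) (b - r)"
        have dc2: "dc_step D r = {#a + d, b - d#} + (D - {#a, b#})"
          unfolding dc a_def b_def d_def using nr Lne Rne by (simp add: Let_def)
        have ab: "a \<in># D" "b \<in># D" "a < r" "r < b" using mL mR unfolding a_def b_def by auto
        have sub: "{#a, b#} \<subseteq># D"
          using ab by (simp add: insert_subset_eq_iff in_diff_count count_greater_zero_iff[symmetric] del: count_greater_zero_iff)
        have aL: "a \<in># L" unfolding a_def using Lne by simp
        have f1: "filter_mset (\<lambda>x. x < r) (D - {#a, b#}) = L - {#a#}"
          using ab by (simp add: filter_diff_mset L_def[symmetric])
        have rin: "r \<in># dc_step D r" unfolding dc2 d_def by (auto simp: min_def)
        have sz: "size (dc_step D r) = size D" unfolding dc2 using sub ab size_mset_mono[OF sub]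
          by (simp add: size_Diff_submset)
        have "filter_mset (\<lambda>x. x < r) (dc_step D r) =
               (if a + d < r then {#a + d#} else {#}) + (L - {#a#})"
          unfolding dc2 using f1 by (auto simp: d_def min_def)
        hence "size (filter_mset (\<lambda>x. x < r) (dc_step D r)) =
               (if a + d < r then 1 else 0) + (size L - 1)"
          using aL sL by (simp add: size_Diff_singleton)
        moreover have "(a + d < r) \<longleftrightarrow> \<not> (r - a \<le> b - r)" unfolding d_def by (auto simp: min_def)
        ultimately show ?thesis using rin sz sL nr Lne Rne
          unfolding L_def[symmetric] R_def[symmetric] a_def b_def by auto
      qed
    qed
  qed
qed


lemma f_mono:
  assumes "D \<noteq> {#}" "r \<le> r'"
  shows "size (filter_mset (\<lambda>x. x < r) (dc_step D r)) \<le> size (filter_mset (\<lambda>x. x < r') (dc_step D r'))"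
proof -
  define L where "L = filter_mset (\<lambda>x. x < r) D"
  define R where "R = filter_mset (\<lambda>x. r < x) D"
  define L' where "L' = filter_mset (\<lambda>x. x < r') D"
  define R' where "R' = filter_mset (\<lambda>x. r' < x) D"
  define g where "g = (r \<notin># D \<and> L \<noteq> {#} \<and> (R = {#} \<or> r - Max_mset L \<le> Min_mset R - r))"
  define g' where "g' = (r' \<notin># D \<and> L' \<noteq> {#} \<and> (R' = {#} \<or> r' - Max_mset L' \<le> Min_mset R' - r'))"
  have f: "size (filter_mset (\<lambda>x. x < r) (dc_step D r)) = (if g then size L - 1 else size L)"
    using dc_facts[OF assms(1), of r] unfolding g_def L_def R_def by simp
  have f': "size (filter_mset (\<lambda>x. x < r') (dc_step D r')) = (if g' then size L' - 1 else size L')"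
    using dc_facts[OF assms(1), of r'] unfolding g'_def L'_def R'_def by simp
  have sub: "L \<subseteq># L'" unfolding L_def L'_def
    by (rule mset_subset_eqI) (use assms(2) in auto)
  have le: "size L \<le> size L'" using size_mset_mono[OF sub] .
  show ?thesis
  proof (cases "size L < size L'")
    case True thus ?thesis using f f' by auto
  next
    case False
    hence eqs: "size L = size L'" using le by simp
    have LL: "L = L'"
    proof (rule ccontr)
      assume "L \<noteq> L'"
      hence "L \<subset># L'" using sub by (simp add: subset_mset.le_less)
      thus False using mset_subset_size eqs by fastforce
    qed
    have gap: "\<And>x. x \<in># D \<Longrightarrow> r \<le> x \<Longrightarrow> x < r' \<Longrightarrow> False"
    proof -
      fix x assume "x \<in># D" "r \<le> x" "x < r'"
      hence "x \<in># L'" "x \<notin># L" unfolding L_def L'_def by auto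
      thus False using LL by simp
    qed
    show ?thesis
    proof (cases g')
      case False thus ?thesis using f f' eqs by auto
    next
      case True
      hence nr': "r' \<notin># D" and Lne: "L' \<noteq> {#}"
        and c: "R' = {#} \<or> r' - Max_mset L' \<le> Min_mset R' - r'" unfolding g'_def by blast+
      have RR: "R = R'" unfolding R_def R'_def
      proof (rule filter_mset_cong[OF refl])
        fix x assume "x \<in># D"
        show "(r < x) = (r' < x)"
        proof
          assume "r < x"
          show "r' < x"
          proof (rule ccontr)
            assume "\<not> r' < x"
            hence "x < r' \<or> x = r'" by auto
            thus False using gap[OF \<open>x \<in># D\<close>] \<open>r < x\<close> nr' \<open>x \<in># D\<close> by auto
          qed
        next
          assume "r' < x" thus "r < x" using assms(2) by simp
        qed
      qed
      have nr: "r \<notin># D"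
      proof
        assume "r \<in># D"
        show False
        proof (cases "r = r'")
          case True thus False using nr' \<open>r \<in># D\<close> by simp
        next
          case False thus False using gap[OF \<open>r \<in># D\<close>] assms(2) by simp
        qed
      qed
      have "R = {#} \<or> r - Max_mset L \<le> Min_mset R - r" using c unfolding RR LL using assms(2) by linarith
      hence g using nr Lne LL unfolding g_def by simp
      thus ?thesis using f f' eqs True by simp
    qed
  qed
qed

definition Inv :: "real multiset \<times> real multiset \<Rightarrow> bool" where
  "Inv st \<longleftrightarrow> fst st \<noteq> {#} \<and> size (fst st) = size (snd st)"

lemma step_facts:
  assumes "Inv (D, A)"
  shows "r \<in># dc_step D r \<and> size (dc_step D r) = size A
     \<and> req_index (dc_step D r) r < size A
     \<and> req_index (dc_step D r) r = size (filter_mset (\<lambda>x. x < r) (dc_step D r))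
     \<and> P_ms A r (sorted_list_of_multiset A ! req_index (dc_step D r) r) (matched_server (dc_step D r) A r)"
proof -
  have D: "D \<noteq> {#}" "size D = size A" using assms unfolding Inv_def by auto
  have d: "r \<in># dc_step D r" "size (dc_step D r) = size A" using dc_facts[OF D(1), of r] D(2) by auto
  show ?thesis using matched_P[OF d(2) d(1)] req_index_eq[OF d(1)] d by blast
qed

lemma Inv_step:
  assumes "Inv st"
  shows "Inv (transf_step dc_step st r)"
proof -
  obtain D A where st: "st = (D, A)" by (cases st)
  have F: "r \<in># dc_step D r \<and> size (dc_step D r) = size A
     \<and> P_ms A r (sorted_list_of_multiset A ! req_index (dc_step D r) r) (matched_server (dc_step D r) A r)"
    using step_facts[of D A r] assms st by blast
  hence "matched_server (dc_step D r) A r \<in># A" unfolding P_ms_def by simp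
  hence "size (add_mset r (A - {#matched_server (dc_step D r) A r#})) = size A"
    by (simp add: size_Diff_singleton) (metis Suc_pred nonempty_has_size size_eq_0_iff_empty gr0I empty_iff set_mset_empty)
  thus ?thesis using F unfolding Inv_def transf_step_def st Let_def by auto
qed

lemma Inv_fold: "Inv st \<Longrightarrow> Inv (fold (\<lambda>r s. transf_step dc_step s r) rs st)"
proof (induction rs arbitrary: st)
  case Nil thus ?case by simp
next
  case (Cons a rs)
  have "Inv (transf_step dc_step st a)" using Cons.prems by (rule Inv_step)
  thus ?case using Cons.IH by simp
qed

lemma Inv_reach:
  assumes "C0 \<noteq> {#}" "reachable (transf_step dc_step) (C0, C0) st"
  shows "Inv st"
proof -
  obtain rs where "st = fold (\<lambda>r s. transf_step dc_step s r) rs (C0, C0)"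
    using assms(2) unfolding reachable_def by blast
  moreover have "Inv (C0, C0)" using assms(1) unfolding Inv_def by simp
  ultimately show ?thesis using Inv_fold by simp
qed

lemma serves_iff:
  assumes "Inv (D, A)"
  shows "serves_with snd (transf_step dc_step) (D, A) r s \<longleftrightarrow> s = matched_server (dc_step D r) A r"
proof -
  define s0 where "s0 = matched_server (dc_step D r) A r"
  have s0A: "s0 \<in># A" using step_facts[OF assms, of r] unfolding P_ms_def s0_def by simp
  have e: "snd (transf_step dc_step (D, A) r) = add_mset r (A - {#s0#})"
    unfolding transf_step_def s0_def Let_def by simp
  show ?thesis unfolding serves_with_def e s0_def[symmetric]
  proof
    assume H: "s \<in># snd (D, A) \<and> add_mset r (A - {#s0#}) = add_mset r (snd (D, A) - {#s#})"
    hence sA: "s \<in># A" and eq: "A - {#s0#} = A - {#s#}" by auto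
    have "add_mset s0 (A - {#s0#}) = add_mset s (A - {#s#})" using s0A sA by simp
    hence "add_mset s0 (A - {#s0#}) = add_mset s (A - {#s0#})" using eq by simp
    thus "s = s0" by simp
  next
    assume "s = s0" thus "s \<in># snd (D, A) \<and> add_mset r (A - {#s0#}) = add_mset r (snd (D, A) - {#s#})"
      using s0A by simp
  qed
qed

theorem lemma5:
  fixes C0 :: "real multiset"
  assumes "C0 \<noteq> {#}"
  shows "lazy_alg snd (transf_step dc_step) (C0, C0)
       \<and> local_alg snd (transf_step dc_step) (C0, C0)
       \<and> monotone_alg snd (transf_step dc_step) (C0, C0)"
proof (intro conjI)
  show "lazy_alg snd (transf_step dc_step) (C0, C0)"
    unfolding lazy_alg_def
  proof (intro allI impI)
    fix st r assume "reachable (transf_step dc_step) (C0, C0) st"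
    hence I: "Inv st" using Inv_reach assms by blast
    obtain D A where st: "st = (D, A)" by (cases st)
    show "\<exists>s. serves_with snd (transf_step dc_step) st r s"
      using serves_iff[of D A r] I st by blast
  qed
  show "local_alg snd (transf_step dc_step) (C0, C0)"
    unfolding local_alg_def
  proof (intro allI impI)
    fix st r s assume "reachable (transf_step dc_step) (C0, C0) st"
      and sv: "serves_with snd (transf_step dc_step) st r s"
    hence I: "Inv st" using Inv_reach assms by blast
    obtain D A where st: "st = (D, A)" by (cases st)
    have "s = matched_server (dc_step D r) A r" using serves_iff[of D A r s] I st sv by simp
    thus "adjacent (snd st) r s" using step_facts[of D A r] I st
      unfolding P_ms_def adjacent_def by simp
  qed
  show "monotone_alg snd (transf_step dc_step) (C0, C0)"
    unfolding monotone_alg_def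
  proof (intro allI impI)
    fix st r s r' assume "reachable (transf_step dc_step) (C0, C0) st"
      and sv: "serves_with snd (transf_step dc_step) st r s" and b: "between r s r'"
    hence I: "Inv st" using Inv_reach assms by blast
    show "serves_with snd (transf_step dc_step) st r' s"
    proof (cases "r' = r")
      case True thus ?thesis using sv by simp
    next
    case rne: False
    obtain D A where st: "st = (D, A)" by (cases st)
    have D0: "D \<noteq> {#}" using I st unfolding Inv_def by simp
    have s: "s = matched_server (dc_step D r) A r" using serves_iff[of D A r s] I st sv by simp
    define ys where "ys = sorted_list_of_multiset A"
    define i where "i = req_index (dc_step D r) r"
    define i' where "i' = req_index (dc_step D r') r'"
    have F: "i < size A" "i = size (filter_mset (\<lambda>x. x < r) (dc_step D r))"
      "P_ms A r (ys ! i) s"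
      using step_facts[of D A r] I st s unfolding i_def ys_def by auto
    have F': "i' < size A" "i' = size (filter_mset (\<lambda>x. x < r') (dc_step D r'))"
      "P_ms A r' (ys ! i') (matched_server (dc_step D r') A r')"
      using step_facts[of D A r'] I st unfolding i'_def ys_def by auto
    have ly: "length ys = size A" unfolding ys_def by (metis mset_sorted_list_of_multiset size_mset)
    have sy: "sorted ys" unfolding ys_def by simp
    have yy: "between r' (ys ! i') s"
    proof (cases "r \<le> r'")
      case True
      have "i \<le> i'" using F(2) F'(2) f_mono[OF D0 True] by simp
      hence "ys ! i \<le> ys ! i'" using sorted_nth_mono[OF sy] F'(1) ly by simp
      thus ?thesis using True rne b F(3) unfolding P_ms_def between_def by (smt (verit))
    next
      case False
      hence "r' \<le> r" by simp
      hence "i' \<le> i" using F(2) F'(2) f_mono[OF D0] by simp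
      hence "ys ! i' \<le> ys ! i" using sorted_nth_mono[OF sy] F(1) ly by simp
      thus ?thesis using False rne b F(3) unfolding P_ms_def between_def by (smt (verit))
    qed
    have "P_ms A r' (ys ! i') s"
      unfolding P_ms_def
    proof (intro conjI ballI impI)
      show "s \<in># A" using F(3) unfolding P_ms_def by simp
      show "between r' (ys ! i') s" by (rule yy)
      fix x assume "x \<in># A" "between r' s x"
      hence "between r s x" using b unfolding between_def by (smt (verit))
      thus "x = s" using F(3) \<open>x \<in># A\<close> unfolding P_ms_def by simp
    qed
    hence "s = matched_server (dc_step D r') A r'" using P_ms_unique F'(3) by blast
    thus "serves_with snd (transf_step dc_step) st r' s" using serves_iff[of D A r' s] I st by simp
    qed
  qed
qed

end
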